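(* Let $X$ be an $n$-globular set and let $y\in T_n^{D^s}(T_n^{D^s}(X))$ be an element whose underlying diagram is a block $B$ and whose minimal labels $D_1,\dots,D_\ell\in T_n^{D^s}(X)$ are nontrivial with $M(D_j)<m(B)$ for all $j$. Then $H(D_j)=H(\mu_X(y))-1$ for all $j$.
   Context: An $n$-globular set $X$: sets $X_0,\dots,X_n$ and maps $s,t\colon X_k\to X_{k-1}$ with $ss=st$, $ts=tt$. $\langle\ell\rangle=\{1<\dots<\ell\}$. A simple $k$-string diagram $D$: numbers $\ell_0=1,\ell_1,\dots,\ell_k\ge0$ and arbitrary functions $v^m\colon\langle\ell_m\rangle\to\langle\ell_{m-1}\rangle$; its source and target are both $(v^1,\dots,v^{k-1})$. An $X$-labelling of $D$: elements $x^m_i\in X_m$ ($0\le m\le k$, $1\le i\le\ell_m$) such that for $m\ge1$, $s(x^m_i)=x^{m-1}_{v^m(i)}$ if $i=\min\{j:v^m(j)=v^m(i)\}$ and otherwise $s(x^m_i)=t(x^m_p)$ with $p=\max\{j<i:v^m(j)=v^m(i)\}$. The source of $(D,x)$ is $(s(D),(x^m_i)_{m\le k-1})$; its target is the same except that for $i\in\mathrm{im}(v^k)$ the label $x^{k-1}_i$ is replaced by $t(x^k_p)$, $p=\max\{j:v^k(j)=i\}$. $T_n^{D^s}(X)_k$ is the set of $X$-labelled simple $k$-string diagrams, an $n$-globular set with these source/target maps. The multiplication $\mu_X\colon T_n^{D^s}(T_n^{D^s}(X))\to T_n^{D^s}(X)$: if a $k$-diagram $D$ is labelled by labelled $m$-diagrams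 $E^m_i$ with underlying diagrams $D^m_i$ (compatibility forces $\ell_j(D^m_i)=\ell_j(D^{m-1}_{v^m(i)})$, $v^j(D^m_i)=v^j(D^{m-1}_{v^m(i)})$ for $j<m$), the composite has level-$m$ set $\coprod_{i=1}^{\ell_m}\langle\ell_m(D^m_i)\rangle$, ordered by component index first and then internally, with map to level $m-1$ sending $a$ in component $i$ to $v^m(D^m_i)(a)$ in component $v^m(i)$, and with $a$ in component $i$ at level $m$ labelled by the $m$-dimensional label at $a$ of $E^m_i$. All notions below for labelled diagrams refer to the underlying diagram. $H(D)=|\{i:\ell_i(D)>1\}|$. $D$ is nondegenerate if $\ell_i(D)>0$ for all $1\le i\le k$, nontrivial if moreover $\ell_i(D)>1$ for some $i$. For nontrivial $D$: $m(D)=\min\{j:\ell_j(D)>1\}$, $M(D)=\max\{j:\ell_j(D)>1\}$. A block is a nontrivial $D$ with $m(D)=M(D)$; the blocks are $B^k(i,\ell,p)$ ($1\le i<k$, $\ell>1$, $1\le p\le\ell$: $\ell_i=\ell$, $\ell_j=1$ for $j\neq i$, $v^{i+1}=(p)$, other maps constant) and $B^k(k,\ell)$ ($\ell>1$: $\ell_k=\ell$, $\ell_j=1$ for $j<k$). The minimal labels of a labelled block are $x_1,\dots,x_\ell$ where, for $B^k(i,\ell,p)$, $x_j=x^i_j$ ($j\ne p$) and $x_p=x^k_1$, and for $B^k(k,\ell)$, $x_j=x^k_j$; they determine the labelling. *)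

theory Defs
  imports Main
begin

text \<open>Indices are 0-based internally: the paper's element i of
  \<langle>l\<rangle> = {1<...<l} is represented by i-1 in {0..<l}.
  A simple k-string diagram is a list vs of length k; vs!(m-1) is the map v^m,
  given as the list of its values (so its length is l_m). l_0 = 1.
  A labelled diagram is a pair (vs, xs) with xs a list of length k+1 and
  xs!m the list of m-dimensional labels (x^m_i). Lists give a canonical
  representation, so equality of labelled diagrams is the intended one.\<close>

definition globular :: "nat \<Rightarrow> (nat \<Rightarrow> 'a set) \<Rightarrow> (nat \<Rightarrow> 'a \<Rightarrow> 'a) \<Rightarrow> (nat \<Rightarrow> 'a \<Rightarrow> 'a) \<Rightarrow> bool" where
  "globular n X s t \<longleftrightarrow>
     (\<forall>k. 1 \<le> k \<and> k \<le> n \<longrightarrow> (\<forall>x\<in>X k. s k x \<in> X (k-1) \<and> t k x \<in> X (k-1))) \<and>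
     (\<forall>k. 2 \<le> k \<and> k \<le> n \<longrightarrow> (\<forall>x\<in>X k. s (k-1) (s k x) = s (k-1) (t k x)
                                        \<and> t (k-1) (s k x) = t (k-1) (t k x)))"

type_synonym diag = "nat list list"
type_synonym 'a ldiag = "nat list list \<times> 'a list list"

definition dg_ell :: "diag \<Rightarrow> nat \<Rightarrow> nat" where
  "dg_ell vs m = (if m = 0 then 1 else length (vs ! (m-1)))"

definition simple_diag :: "nat \<Rightarrow> diag \<Rightarrow> bool" where
  "simple_diag k vs \<longleftrightarrow> length vs = k \<and>
     (\<forall>m\<in>{1..k}. \<forall>i<dg_ell vs m. vs!(m-1)!i < dg_ell vs (m-1))"

definition labelling_in :: "(nat \<Rightarrow> 'a set) \<Rightarrow> (nat \<Rightarrow> 'a \<Rightarrow> 'a) \<Rightarrow> (nat \<Rightarrow> 'a \<Rightarrow> 'a) \<Rightarrow> nat \<Rightarrow> 'a ldiag \<Rightarrow> bool" where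
  "labelling_in X s t k D \<longleftrightarrow>
     (let vs = fst D; xs = snd D in
       simple_diag k vs \<and> length xs = Suc k \<and>
       (\<forall>m\<le>k. length (xs!m) = dg_ell vs m \<and> (\<forall>i<dg_ell vs m. xs!m!i \<in> X m)) \<and>
       (\<forall>m\<in>{1..k}. \<forall>i<dg_ell vs m. let w = vs!(m-1) in
          (if (\<forall>j<i. w!j \<noteq> w!i) then s m (xs!m!i) = xs!(m-1)!(w!i)
           else s m (xs!m!i) = t m (xs!m!(Max {j. j < i \<and> w!j = w!i})))))"

definition Tset :: "(nat \<Rightarrow> 'a set) \<Rightarrow> (nat \<Rightarrow> 'a \<Rightarrow> 'a) \<Rightarrow> (nat \<Rightarrow> 'a \<Rightarrow> 'a) \<Rightarrow> nat \<Rightarrow> 'a ldiag set" where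
  "Tset X s t k = {D. labelling_in X s t k D}"

definition Tsrc :: "'a ldiag \<Rightarrow> 'a ldiag" where
  "Tsrc D = (butlast (fst D), butlast (snd D))"

definition Ttgt :: "(nat \<Rightarrow> 'a \<Rightarrow> 'a) \<Rightarrow> 'a ldiag \<Rightarrow> 'a ldiag" where
  "Ttgt t D = (let vs = fst D; xs = snd D; k = length vs; w = last vs in
     (butlast vs,
      (butlast xs)[k-1 := map (\<lambda>i. if i \<in> set w
                                   then t k (xs!k!(Max {j. j < length w \<and> w!j = i}))
                                   else xs!(k-1)!i) [0..<length (xs!(k-1))]]))"

definition TTset :: "(nat \<Rightarrow> 'a set) \<Rightarrow> (nat \<Rightarrow> 'a \<Rightarrow> 'a) \<Rightarrow> (nat \<Rightarrow> 'a \<Rightarrow> 'a) \<Rightarrow> nat \<Rightarrow> 'a ldiag ldiag set" where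
  "TTset X s t k = Tset (Tset X s t) (\<lambda>_. Tsrc) (\<lambda>_. Ttgt t) k"

definition mu :: "'a ldiag ldiag \<Rightarrow> 'a ldiag" where
  "mu y = (let vs = fst y; E = snd y; k = length vs;
             off = (\<lambda>m j. sum_list (map (\<lambda>i. length (snd (E!m!i) ! m)) [0..<j])) in
     (map (\<lambda>m. concat (map (\<lambda>i. map (\<lambda>a. off (m-1) (vs!(m-1)!i) + a) (fst (E!m!i) ! (m-1)))
                          [0..<dg_ell vs m])) [1..<Suc k],
      map (\<lambda>m. concat (map (\<lambda>i. snd (E!m!i) ! m) [0..<dg_ell vs m])) [0..<Suc k]))"

definition ell :: "('b ldiag) \<Rightarrow> nat \<Rightarrow> nat" where
  "ell D m = dg_ell (fst D) m"

definition ddim :: "'b ldiag \<Rightarrow> nat" where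
  "ddim D = length (fst D)"

definition big_levels :: "'b ldiag \<Rightarrow> nat set" where
  "big_levels D = {i. i \<le> ddim D \<and> ell D i > 1}"

definition H :: "'b ldiag \<Rightarrow> nat" where
  "H D = card (big_levels D)"

definition nondegenerate :: "'b ldiag \<Rightarrow> bool" where
  "nondegenerate D \<longleftrightarrow> (\<forall>i\<in>{1..ddim D}. ell D i > 0)"

definition nontrivial :: "'b ldiag \<Rightarrow> bool" where
  "nontrivial D \<longleftrightarrow> nondegenerate D \<and> (\<exists>i\<in>{1..ddim D}. ell D i > 1)"

definition mlev :: "'b ldiag \<Rightarrow> nat" where
  "mlev D = Min (big_levels D)"

definition Mlev :: "'b ldiag \<Rightarrow> nat" where
  "Mlev D = Max (big_levels D)"

definition is_block :: "'b ldiag \<Rightarrow> bool" where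
  "is_block D \<longleftrightarrow> nontrivial D \<and> mlev D = Mlev D"

text \<open>Minimal labels of a labelled block. For B^k(i,l,p) with i<k:
  x_j = x^i_j (j \<noteq> p), x_p = x^k_1, where v^{i+1} = (p);
  for B^k(k,l): x_j = x^k_j. (Here i = m(B).)\<close>
definition minimal_labels :: "'b ldiag \<Rightarrow> 'b list" where
  "minimal_labels D = (let k = ddim D; i = mlev D in
     if i = k then snd D ! k
     else (snd D ! i)[(fst D ! i ! 0) := snd D ! k ! 0])"

end

theory Submission
  imports Defs
begin

lemma TT_facts:
  assumes "y \<in> TTset X s t k"
  shows "length (fst y) = k"
    and "\<And>m i. 1 \<le> m \<Longrightarrow> m \<le> k \<Longrightarrow> i < dg_ell (fst y) m \<Longrightarrow> fst y!(m-1)!i < dg_ell (fst y) (m-1)"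
    and "\<And>m. m \<le> k \<Longrightarrow> length (snd y!m) = dg_ell (fst y) m"
    and "\<And>m i. m \<le> k \<Longrightarrow> i < dg_ell (fst y) m \<Longrightarrow> length (fst (snd y!m!i)) = m"
    and "\<And>m i. 1 \<le> m \<Longrightarrow> m \<le> k \<Longrightarrow> i < dg_ell (fst y) m \<Longrightarrow>
          (if (\<forall>j<i. fst y!(m-1)!j \<noteq> fst y!(m-1)!i) then Tsrc (snd y!m!i) = snd y!(m-1)!(fst y!(m-1)!i)
           else Tsrc (snd y!m!i) = Ttgt t (snd y!m!(Max {j. j < i \<and> fst y!(m-1)!j = fst y!(m-1)!i})))"
proof -
  have L: "labelling_in (Tset X s t) (\<lambda>_. Tsrc) (\<lambda>_. Ttgt t) k y"
    using assms by (simp add: TTset_def Tset_def)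
  show "length (fst y) = k" using L by (simp add: labelling_in_def simple_diag_def Let_def)
  show "\<And>m i. 1 \<le> m \<Longrightarrow> m \<le> k \<Longrightarrow> i < dg_ell (fst y) m \<Longrightarrow> fst y!(m-1)!i < dg_ell (fst y) (m-1)"
    using L by (simp add: labelling_in_def simple_diag_def Let_def)
  show "\<And>m. m \<le> k \<Longrightarrow> length (snd y!m) = dg_ell (fst y) m"
    using L by (simp add: labelling_in_def Let_def)
  show "\<And>m i. m \<le> k \<Longrightarrow> i < dg_ell (fst y) m \<Longrightarrow> length (fst (snd y!m!i)) = m"
  proof -
    fix m i assume "m \<le> k" "i < dg_ell (fst y) m"
    then have "snd y!m!i \<in> Tset X s t m" using L by (simp add: labelling_in_def Let_def)
    then show "length (fst (snd y!m!i)) = m"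
      by (simp add: Tset_def labelling_in_def simple_diag_def Let_def)
  qed
  show "\<And>m i. 1 \<le> m \<Longrightarrow> m \<le> k \<Longrightarrow> i < dg_ell (fst y) m \<Longrightarrow>
          (if (\<forall>j<i. fst y!(m-1)!j \<noteq> fst y!(m-1)!i) then Tsrc (snd y!m!i) = snd y!(m-1)!(fst y!(m-1)!i)
           else Tsrc (snd y!m!i) = Ttgt t (snd y!m!(Max {j. j < i \<and> fst y!(m-1)!j = fst y!(m-1)!i})))"
  proof -
    fix m i assume a: "1 \<le> m" "m \<le> k" "i < dg_ell (fst y) m"
    have "\<forall>m\<in>{1..k}. \<forall>i<dg_ell (fst y) m. let w = fst y!(m-1) in
          (if (\<forall>j<i. w!j \<noteq> w!i) then Tsrc (snd y!m!i) = snd y!(m-1)!(w!i)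
           else Tsrc (snd y!m!i) = Ttgt t (snd y!m!(Max {j. j < i \<and> w!j = w!i})))"
      using L unfolding labelling_in_def Let_def by meson
    then show "?thesis m i" using a by (simp add: Let_def)
  qed
qed

lemma fst_Tsrc: "fst (Tsrc D) = butlast (fst D)" by (simp add: Tsrc_def)
lemma fst_Ttgt: "fst (Ttgt t D) = butlast (fst D)" by (simp add: Ttgt_def Let_def)

lemma butlast_src:
  assumes y: "y \<in> TTset X s t k" and m: "1 \<le> m" "m \<le> k" and j: "j < dg_ell (fst y) m"
  shows "butlast (fst (snd y!m!j)) = fst (snd y!(m-1)!(fst y!(m-1)!j))"
  using j
proof (induction j rule: less_induct)
  case (less j)
  let ?w = "fst y!(m-1)"
  note S = TT_facts(5)[OF y m less.prems]
  show ?case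
  proof (cases "\<forall>j'<j. ?w!j' \<noteq> ?w!j")
    case True
    then have "Tsrc (snd y!m!j) = snd y!(m-1)!(?w!j)" using S by simp
    from arg_cong[where f=fst, OF this] show ?thesis unfolding fst_Tsrc .
  next
    case False
    let ?A = "{j'. j' < j \<and> ?w!j' = ?w!j}"
    have fin: "finite ?A" by simp
    have ne: "?A \<noteq> {}" using False by auto
    have "Max ?A \<in> ?A" using Max_in[OF fin ne] .
    then have p: "Max ?A < j" "?w!(Max ?A) = ?w!j" by auto
    have "butlast (fst (snd y!m!j)) = butlast (fst (snd y!m!(Max ?A)))"
    proof -
      have "Tsrc (snd y!m!j) = Ttgt t (snd y!m!(Max ?A))" using S False by simp
      from arg_cong[where f=fst, OF this] show ?thesis unfolding fst_Tsrc fst_Ttgt .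
    qed
    also have "\<dots> = fst (snd y!(m-1)!(?w!(Max ?A)))"
      using less.IH[OF p(1)] p(1) less.prems by simp
    finally show ?thesis using p(2) by simp
  qed
qed

lemma dg_ell_butlast: "q < length xs \<Longrightarrow> dg_ell (butlast xs) q = dg_ell xs q"
  by (simp add: dg_ell_def nth_butlast)

lemma ell_step:
  assumes y: "y \<in> TTset X s t k" and m: "1 \<le> m" "m \<le> k" and j: "j < dg_ell (fst y) m" and q: "q < m"
  shows "dg_ell (fst (snd y!m!j)) q = dg_ell (fst (snd y!(m-1)!(fst y!(m-1)!j))) q"
  using butlast_src[OF y m j] dg_ell_butlast[of q "fst (snd y!m!j)"] TT_facts(4)[OF y m(2) j] q
  by simp

lemma ell_anc0:
  assumes y: "y \<in> TTset X s t k" and "q \<le> m" "m \<le> k" "j < dg_ell (fst y) m" "dg_ell (fst y) q = 1"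
  shows "dg_ell (fst (snd y!m!j)) q = dg_ell (fst (snd y!q!0)) q"
  using assms(2-5)
proof (induction m arbitrary: j)
  case 0
  then show ?case by simp
next
  case (Suc m)
  show ?case
  proof (cases "q = Suc m")
    case True
    then show ?thesis using Suc.prems by simp
  next
    case False
    then have "q \<le> m" using Suc.prems by simp
    have v: "fst y!m!j < dg_ell (fst y) m"
      using TT_facts(2)[OF y, of "Suc m" j] Suc.prems by simp
    have "dg_ell (fst (snd y!Suc m!j)) q = dg_ell (fst (snd y!m!(fst y!m!j))) q"
      using ell_step[OF y, of "Suc m" j q] Suc.prems \<open>q \<le> m\<close> by simp
    also have "\<dots> = dg_ell (fst (snd y!q!0)) q"
      using Suc.IH[OF \<open>q \<le> m\<close> _ v] Suc.prems by simp
    finally show ?thesis .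
  qed
qed

lemma ell_chain1:
  assumes y: "y \<in> TTset X s t k" and "Suc i \<le> m" "m \<le> k" "q \<le> i"
    and ones: "\<forall>r. Suc i \<le> r \<and> r \<le> k \<longrightarrow> dg_ell (fst y) r = 1"
  shows "dg_ell (fst (snd y!m!0)) q = dg_ell (fst (snd y!Suc i!0)) q"
  using assms(2-4)
proof (induction m)
  case 0
  then show ?case by simp
next
  case (Suc m)
  show ?case
  proof (cases "Suc i = Suc m")
    case True
    then show ?thesis by simp
  next
    case False
    then have "Suc i \<le> m" using Suc.prems by simp
    have one: "dg_ell (fst y) m = 1" "dg_ell (fst y) (Suc m) = 1" using ones Suc.prems \<open>Suc i \<le> m\<close> by auto
    have v: "fst y!m!0 < dg_ell (fst y) m"
      using TT_facts(2)[OF y, of "Suc m" 0] Suc.prems one by simp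
    have "dg_ell (fst (snd y!Suc m!0)) q = dg_ell (fst (snd y!m!(fst y!m!0))) q"
      using ell_step[OF y, of "Suc m" 0 q] Suc.prems \<open>Suc i \<le> m\<close> one by simp
    also have "fst y!m!0 = 0" using v one by simp
    finally show ?thesis using Suc.IH \<open>Suc i \<le> m\<close> Suc.prems by simp
  qed
qed

lemma ell_mu:
  assumes y: "y \<in> TTset X s t k" and "1 \<le> m" "m \<le> k"
  shows "ell (mu y) m = (\<Sum>i<dg_ell (fst y) m. dg_ell (fst (snd y!m!i)) m)"
proof -
  have lk: "length (fst y) = k" using TT_facts(1)[OF y] .
  have u: "[1..<Suc k] ! (m - 1) = m" using assms(2,3) by (simp del: upt_Suc)
  have mk: "m - 1 < length [1..<Suc k]" using assms(2,3) by (simp del: upt_Suc)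
  have "ell (mu y) m = length (fst (mu y) ! (m-1))"
    using assms(2) by (simp add: ell_def dg_ell_def)
  also have "\<dots> = sum_list (map (\<lambda>i. length (fst (snd y ! m ! i) ! (m-1))) [0..<dg_ell (fst y) m])"
    unfolding mu_def Let_def fst_conv lk nth_map[OF mk] u by (simp add: length_concat comp_def del: upt_Suc)
  also have "\<dots> = (\<Sum>i<dg_ell (fst y) m. length (fst (snd y!m!i) ! (m-1)))"
    by (simp add: sum_list_sum_nth atLeast0LessThan)
  also have "\<dots> = (\<Sum>i<dg_ell (fst y) m. dg_ell (fst (snd y!m!i)) m)"
    using assms(2) by (simp add: dg_ell_def)
  finally show ?thesis .
qed

lemma ddim_mu: assumes "y \<in> TTset X s t k" shows "ddim (mu y) = k"
  using TT_facts(1)[OF assms] by (simp add: ddim_def mu_def Let_def del: upt_Suc)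


lemma big_fin: "finite (big_levels D)"
  by (rule finite_subset[of _ "{..ddim D}"]) (auto simp: big_levels_def)

lemma small:
  assumes "nontrivial D" "Mlev D < i" "q \<in> big_levels D" shows "q < i"
  using Max_ge[OF big_fin assms(3)] assms(2) unfolding Mlev_def by simp

lemma ell_one:
  assumes "nontrivial D" "Mlev D < i" "1 \<le> i" "i \<le> ddim D" shows "ell D i = 1"
proof -
  have "ell D i > 0" using assms(1,3,4) by (auto simp: nontrivial_def nondegenerate_def)
  moreover have "i \<notin> big_levels D" using small[OF assms(1,2)] by blast
  ultimately show ?thesis using assms(4) by (auto simp: big_levels_def)
qed

theorem mainTheorem7:
  fixes X :: "nat \<Rightarrow> 'a set" and s t :: "nat \<Rightarrow> 'a \<Rightarrow> 'a"
    and n k :: nat and y :: "'a ldiag ldiag"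
  assumes "globular n X s t"
    and "k \<le> n"
    and "y \<in> TTset X s t k"
    and "is_block y"
    and "\<forall>D\<in>set (minimal_labels y). nontrivial D \<and> Mlev D < mlev y"
  shows "\<forall>D\<in>set (minimal_labels y). H D = H (mu y) - 1"
proof -
  note y = assms(3)
  define i0 where "i0 = mlev y"
  define vs where "vs = fst y"
  define E where "E = snd y"
  have dy: "ddim y = k" using TT_facts(1)[OF y] by (simp add: ddim_def)
  have nt: "nontrivial y" and mM: "mlev y = Mlev y" using assms(4) by (auto simp: is_block_def)
  have fin: "finite (big_levels y)" by (rule big_fin)
  have ne: "big_levels y \<noteq> {}" using nt by (auto simp: nontrivial_def big_levels_def)
  have i0in: "i0 \<in> big_levels y" unfolding i0_def mlev_def using Min_in[OF fin ne] .
  have i0k: "i0 \<le> k" and i0l: "dg_ell vs i0 > 1" using i0in dy by (auto simp: big_levels_def ell_def vs_def)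
  have i01: "1 \<le> i0" using i0l by (cases i0) (auto simp: dg_ell_def)
  have ones: "dg_ell vs q = 1" if "q \<le> k" "q \<noteq> i0" for q
  proof (cases "q = 0")
    case True then show ?thesis by (simp add: dg_ell_def)
  next
    case False
    have "dg_ell vs q > 0" using nt that False dy by (auto simp: nontrivial_def nondegenerate_def ell_def vs_def)
    moreover have "\<not> dg_ell vs q > 1"
    proof
      assume "dg_ell vs q > 1"
      then have qb: "q \<in> big_levels y" using that dy by (simp add: big_levels_def ell_def vs_def)
      have "Min (big_levels y) \<le> q" "q \<le> Max (big_levels y)" using Min_le[OF fin qb] Max_ge[OF fin qb] .
      then show False using mM that(2) unfolding i0_def mlev_def Mlev_def by simp
    qed
    ultimately show ?thesis by simp
  qed
  have hyp: "\<And>D. D \<in> set (minimal_labels y) \<Longrightarrow> nontrivial D \<and> Mlev D < i0"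
    using assms(5) i0_def by simp
  have MLe: "minimal_labels y = (if i0 = k then E ! k else (E ! i0)[(vs ! i0 ! 0) := E ! k ! 0])"
    unfolding minimal_labels_def Let_def dy i0_def vs_def E_def by simp
  have lenE: "\<And>m. m \<le> k \<Longrightarrow> length (E!m) = dg_ell vs m" using TT_facts(3)[OF y] E_def vs_def by simp
  have ddE: "\<And>m j. m \<le> k \<Longrightarrow> j < dg_ell vs m \<Longrightarrow> ddim (E!m!j) = m"
    using TT_facts(4)[OF y] E_def vs_def by (simp add: ddim_def)
  have cand: "\<exists>m j. (m = i0 \<or> m = k) \<and> j < dg_ell vs m \<and> D = E!m!j" if "D \<in> set (minimal_labels y)" for D
  proof (cases "i0 = k")
    case True
    then show ?thesis using that MLe lenE[of k] by (auto simp: in_set_conv_nth)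
  next
    case False
    then have "D \<in> insert (E!k!0) (set (E!i0))" using that MLe set_update_subset_insert by fastforce
    moreover have "0 < dg_ell vs k" using ones[of k] False by simp
    ultimately show ?thesis using lenE[OF i0k] by (auto simp: in_set_conv_nth)
  qed
  have pk: "vs ! i0 ! 0 < dg_ell vs i0" and Ek: "E!k!0 \<in> set (minimal_labels y)" if "i0 < k"
  proof -
    have "dg_ell vs (Suc i0) = 1" using ones[of "Suc i0"] that by simp
    then show pk: "vs ! i0 ! 0 < dg_ell vs i0"
      using TT_facts(2)[OF y, of "Suc i0" 0] that vs_def by simp
    show "E!k!0 \<in> set (minimal_labels y)" using MLe that pk lenE[OF i0k] by (auto simp: set_update_memI)
  qed
  have lev1: "dg_ell (fst (E!i0!j)) i0 = 1" if "j < dg_ell vs i0" for j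
  proof (cases "i0 = k")
    case True
    then have "E!i0!j \<in> set (minimal_labels y)" using MLe that lenE[of k] by simp
    then have h: "nontrivial (E!i0!j) \<and> Mlev (E!i0!j) < i0" by (rule hyp)
    then show ?thesis using ell_one[OF h[THEN conjunct1] h[THEN conjunct2] i01] ddE[OF i0k that] by (simp add: ell_def)
  next
    case False
    then have lt: "i0 < k" using i0k by simp
    show ?thesis
    proof (cases "j = vs ! i0 ! 0")
      case False
      then have "minimal_labels y ! j = E!i0!j" using MLe lt by simp
      then have "E!i0!j \<in> set (minimal_labels y)" using MLe that lenE[OF i0k] lt by (metis length_list_update nth_mem)
      then have h: "nontrivial (E!i0!j) \<and> Mlev (E!i0!j) < i0" by (rule hyp)
    then show ?thesis using ell_one[OF h[THEN conjunct1] h[THEN conjunct2] i01] ddE[OF i0k that] by (simp add: ell_def)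
    next
      case True
      have o1: "dg_ell vs (Suc i0) = 1" using ones[of "Suc i0"] lt by simp
      have "dg_ell (fst (E!Suc i0!0)) i0 = dg_ell (fst (E!i0!j)) i0"
        using ell_step[OF y, of "Suc i0" 0 i0] lt o1 True by (simp add: E_def vs_def)
      moreover have "dg_ell (fst (E!k!0)) i0 = dg_ell (fst (E!Suc i0!0)) i0"
        using ell_chain1[OF y, of i0 k i0] lt ones by (simp add: E_def vs_def)
      moreover have "dg_ell (fst (E!k!0)) i0 = 1"
      proof -
        have h: "nontrivial (E!k!0) \<and> Mlev (E!k!0) < i0" by (rule hyp[OF Ek[OF lt]])
        have "ddim (E!k!0) = k" using ddE[OF order.refl, of 0] lt ones[of k] by simp
        then show ?thesis using ell_one[OF h[THEN conjunct1] h[THEN conjunct2] i01] lt by (simp add: ell_def)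
      qed
      ultimately show ?thesis by simp
    qed
  qed
  have mu_i0: "ell (mu y) i0 = dg_ell vs i0"
    using ell_mu[OF y i01 i0k] lev1 by (simp add: E_def vs_def)
  have mu_hi: "ell (mu y) q \<le> 1" if "i0 < q" "q \<le> k" for q
  proof -
    have lt: "i0 < k" using that by simp
    have o: "dg_ell vs q = 1" "dg_ell vs k = 1" using ones that by auto
    have "ell (mu y) q = dg_ell (fst (E!q!0)) q"
      using ell_mu[OF y, of q] that o i01 by (simp add: E_def vs_def)
    also have "\<dots> = dg_ell (fst (E!k!0)) q"
      using ell_anc0[OF y, of q k 0] that o by (simp add: E_def vs_def)
    finally have eq: "ell (mu y) q = ell (E!k!0) q" by (simp add: ell_def)
    have "q \<notin> big_levels (E!k!0)" using small[of "E!k!0" i0 q] hyp[OF Ek[OF lt]] that by auto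
    moreover have "ddim (E!k!0) = k" using ddE[of k 0] o by simp
    ultimately show ?thesis using eq that by (auto simp: big_levels_def)
  qed
  have mu_lo: "ell D q = ell (mu y) q" if Dq: "D \<in> set (minimal_labels y)" "q < i0" for D q
  proof -
    obtain m j where mj: "m = i0 \<or> m = k" "j < dg_ell vs m" "D = E!m!j" using cand[OF Dq(1)] by blast
    show ?thesis
    proof (cases "q = 0")
      case True then show ?thesis by (simp add: ell_def dg_ell_def)
    next
      case False
      have o: "dg_ell vs q = 1" using ones that i0k by simp
      have "ell D q = dg_ell (fst (E!q!0)) q"
        using ell_anc0[OF y, of q m j] mj that i0k o by (auto simp: E_def vs_def ell_def)
      also have "\<dots> = ell (mu y) q"
        using ell_mu[OF y, of q] False that i0k o by (simp add: E_def vs_def)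
      finally show ?thesis .
    qed
  qed
  show ?thesis
  proof
    fix D assume D: "D \<in> set (minimal_labels y)"
    obtain m j where mj: "m = i0 \<or> m = k" "j < dg_ell vs m" "D = E!m!j" using cand[OF D] by blast
    have dD: "i0 \<le> ddim D" using ddE mj i0k by auto
    have ntD: "nontrivial D" and MD: "Mlev D < i0" using hyp[OF D] by auto
    have "big_levels (mu y) = insert i0 (big_levels D)"
    proof (intro set_eqI iffI)
      fix x assume x: "x \<in> big_levels (mu y)"
      then have "x \<le> k" "ell (mu y) x > 1" using ddim_mu[OF y] by (auto simp: big_levels_def)
      then have "x \<le> i0" using mu_hi by (meson leI not_less)
      show "x \<in> insert i0 (big_levels D)"
      proof (cases "x = i0")
        case False
        then have "x < i0" using \<open>x \<le> i0\<close> by simp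
        then have "ell D x = ell (mu y) x" using mu_lo[OF D] by blast
        then show ?thesis using \<open>x < i0\<close> \<open>ell (mu y) x > 1\<close> dD by (simp add: big_levels_def)
      qed simp
    next
      fix x assume x: "x \<in> insert i0 (big_levels D)"
      show "x \<in> big_levels (mu y)"
      proof (cases "x = i0")
        case True then show ?thesis using mu_i0 i0l i0k ddim_mu[OF y] by (simp add: big_levels_def)
      next
        case False
        then have xb: "x \<in> big_levels D" using x by simp
        then have "x < i0" using small[OF ntD MD] by blast
        then show ?thesis using xb mu_lo[OF D, of x] i0k ddim_mu[OF y] by (auto simp: big_levels_def)
      qed
    qed
    moreover have "i0 \<notin> big_levels D" using small[OF ntD MD] by blast
    ultimately show "H D = H (mu y) - 1" using big_fin[of D] by (simp add: H_def)
  qed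
qed

end
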